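(* Let $k\ge2$ and $n\ge3$. If $k$ is even, then $\mathcal{F}_{n,k}(x)$ has no nonzero real roots. If $k$ is odd, then $\mathcal{F}_{n,k}(x)$ has no positive real roots.
   Context: For $k\ge2$ and $n\ge1$, the polynomials $\mathcal{F}_{n,k}(x)$ are defined by $\mathcal{F}_{1,k}=1$, $\mathcal{F}_{n,k}=0$ for $n=0,-1,\dots,-(k-2)$, and $\mathcal{F}_{n,k}(x)=x^{k-1}\mathcal{F}_{n-1,k}(x)+x^{k-2}\mathcal{F}_{n-2,k}(x)+\dots+\mathcal{F}_{n-k,k}(x)$ for $n\ge2$. *)

theory Defs
  imports "HOL-Computational_Algebra.Polynomial"
begin

text \<open>kfib k n is the polynomial F_{n,k}(x) for n \<ge> 1; index 0 stands for all the
  indices 0, -1, ..., -(k-2), where the polynomial is 0. For j \<ge> n the nat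
  subtraction n - j truncates to 0, which matches F_{n-j,k} = 0 for n - j \<le> 0
  (in the recurrence n - j \<ge> 2 - k always).\<close>
fun kfib :: "nat \<Rightarrow> nat \<Rightarrow> real poly" where
  "kfib k 0 = 0"
| "kfib k (Suc 0) = 1"
| "kfib k (Suc (Suc m)) =
     (\<Sum>j\<in>{1..k}. [:0, 1:] ^ (k - j) * kfib k (Suc (Suc m) - j))"


end

theory Submission
  imports Defs
begin

lemma kfib_rec: "n \<ge> 2 \<Longrightarrow> kfib k n = (\<Sum>j\<in>{1..k}. [:0, 1:] ^ (k - j) * kfib k (n - j))"
proof -
  assume "n \<ge> 2"
  then obtain m where "n = Suc (Suc m)" by (metis add_2_eq_Suc le_Suc_ex)
  then show ?thesis by simp
qed

lemma kfib_pos: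
  assumes "k \<ge> 1" "(x::real) > 0"
  shows "poly (kfib k n) x \<ge> 0 \<and> (n \<ge> 1 \<longrightarrow> poly (kfib k n) x > 0)"
proof (induction n rule: less_induct)
  case (less n)
  show ?case
  proof (cases "n \<ge> 2")
    case False
    then have "n = 0 \<or> n = 1" by auto
    then show ?thesis by auto
  next
    case True
    have nn: "\<forall>j\<in>{1..k}. 0 \<le> x ^ (k - j) * poly (kfib k (n - j)) x"
      using less True assms by auto
    have p: "0 < x ^ (k - 1) * poly (kfib k (n - 1)) x"
      using less[of "n-1"] True assms by auto
    have "(\<Sum>j\<in>{1..k}. x ^ (k - j) * poly (kfib k (n - j)) x) > 0"
      by (rule sum_pos2[where i=1]) (use p nn assms(1) in auto)
    then show ?thesis using True by (simp add: kfib_rec poly_sum)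
  qed
qed

lemma kfib_neg:
  assumes "even k"
  shows "poly (kfib k n) (-x) = (-1::real)^(n+1) * poly (kfib k n) x"
proof (induction n rule: less_induct)
  case (less n)
  show ?case
  proof (cases "n \<ge> 2")
    case False
    then have "n = 0 \<or> n = 1" by auto
    then show ?thesis by auto
  next
    case True
    have "\<forall>j\<in>{1..k}. (-x) ^ (k - j) * poly (kfib k (n - j)) (-x)
        = (-1)^(n+1) * (x ^ (k - j) * poly (kfib k (n - j)) x)"
    proof
      fix j assume j: "j \<in> {1..k}"
      show "(-x) ^ (k - j) * poly (kfib k (n - j)) (-x)
        = (-1)^(n+1) * (x ^ (k - j) * poly (kfib k (n - j)) x)"
      proof (cases "j < n")
        case False
        then have "n - j = 0" by auto
        then show ?thesis by simp
      next
        case jn: True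
        have jk: "j \<le> k" using j by auto
        have eq: "k-j+(n-j+1) + 2*j = k + (n+1)" using jk jn by simp
        have "even (k-j+(n-j+1)) = even (k-j+(n-j+1) + 2*j)" by simp
        also have "\<dots> = even (k + (n+1))" by (simp only: eq)
        also have "\<dots> = even (n+1)" using assms by simp
        finally have e: "even ((k-j)+(n-j+1)) = even (n+1)" .
        have "(-1::real)^((k-j)+(n-j+1)) = (-1)^(n+1)"
          using e by (cases "even (n+1)") (simp_all add: minus_one_power_iff)
        then have m1: "(-1::real)^(k-j) * (-1)^(n-j+1) = (-1)^(n+1)" by (simp only: power_add)
        have m2: "(-x)^(k-j) = (-1)^(k-j) * x^(k-j)"
          by (rule power_minus)
        have ih: "poly (kfib k (n - j)) (-x) = (-1)^(n-j+1) * poly (kfib k (n - j)) x"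
        proof -
          have "n - j < n" using jn j by auto
          then show ?thesis by (rule less)
        qed
        have "(-x) ^ (k - j) * poly (kfib k (n - j)) (-x)
            = ((-1)^(k-j) * (-1)^(n-j+1)) * (x ^ (k - j) * poly (kfib k (n - j)) x)"
          unfolding m2 ih by (simp only: mult_ac)
        also have "\<dots> = (-1)^(n+1) * (x ^ (k - j) * poly (kfib k (n - j)) x)"
          by (simp only: m1)
        finally show ?thesis .
      qed
    qed
    then have "(\<Sum>j\<in>{1..k}. (-x) ^ (k - j) * poly (kfib k (n - j)) (-x))
        = (-1)^(n+1) * (\<Sum>j\<in>{1..k}. x ^ (k - j) * poly (kfib k (n - j)) x)"
      by (simp add: sum_distrib_left)
    then show ?thesis using True by (simp add: kfib_rec poly_sum)
  qed
qed

theorem mainTheorem15: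
  fixes k n :: nat
  assumes "k \<ge> 2" and "n \<ge> 3"
  shows "(even k \<longrightarrow> (\<forall>x::real. x \<noteq> 0 \<longrightarrow> poly (kfib k n) x \<noteq> 0))
       \<and> (odd k \<longrightarrow> (\<forall>x::real. x > 0 \<longrightarrow> poly (kfib k n) x \<noteq> 0))"
proof -
  have pos: "\<And>x::real. x > 0 \<Longrightarrow> poly (kfib k n) x \<noteq> 0"
    using kfib_pos[of k _ n] assms by fastforce
  have neg: "\<And>x::real. even k \<Longrightarrow> x \<noteq> 0 \<Longrightarrow> poly (kfib k n) x \<noteq> 0"
  proof -
    fix x :: real assume ek: "even k" and x: "x \<noteq> 0"
    show "poly (kfib k n) x \<noteq> 0"
    proof (cases "x > 0")
      case True then show ?thesis using pos by auto
    next
      case False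
      then have "-x > 0" using x by auto
      then have "poly (kfib k n) (-x) \<noteq> 0" using pos by auto
      moreover have "poly (kfib k n) (- (-x)) = (-1)^(n+1) * poly (kfib k n) (-x)"
        using kfib_neg[OF ek] by blast
      ultimately show ?thesis by simp
    qed
  qed
  show ?thesis using pos neg by blast
qed

end
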